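(* Let $V\in\mathbb{R}^{d\times d}$ be symmetric positive definite, let $\hat\theta\in\mathbb{R}^d$ and $\beta\ge 0$, and let $\mathcal{E}=\{\theta\in\mathbb{R}^d:\|\theta-\hat\theta\|_V\le\beta\}$. Assume $\|\hat\theta\|_V>\beta$ and put $\phi=\sqrt{\|\hat\theta\|_V^2-\beta^2}>0$. Then $0\notin\mathcal{E}$, and for every $\theta\in\mathcal{E}$, $$\Big\|\tfrac{\theta}{\|\theta\|}\Big\|_V\le\frac{\|\hat\theta\|_{V^2}}{\phi}.$$
   Context: $\|\cdot\|$ is the Euclidean norm. For a symmetric positive definite matrix $A$, $\|x\|_A=\sqrt{x^\top Ax}$; in particular $\|\hat\theta\|_{V^2}=\sqrt{\hat\theta^\top V^2\hat\theta}=\|V\hat\theta\|$. The vector $\theta/\|\theta\|$ is the maximizer of $x\mapsto\langle x,\theta\rangle$ over the unit sphere $\{x:\|x\|=1\}$. *)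

theory Defs
  imports "HOL-Analysis.Analysis"
begin

definition wnorm :: "real^'n^'n \<Rightarrow> real^'n \<Rightarrow> real" where
  "wnorm A x = sqrt (x \<bullet> (A *v x))"

definition sym_pos_def_mat :: "real^'n^'n \<Rightarrow> bool" where
  "sym_pos_def_mat V \<longleftrightarrow> transpose V = V \<and> (\<forall>x. x \<noteq> 0 \<longrightarrow> x \<bullet> (V *v x) > 0)"

end

theory Submission
  imports Defs
begin

lemma symV: assumes "transpose V = V" shows "x \<bullet> (V *v y) = y \<bullet> (V *v (x::real^'n))"
proof -
  have "x \<bullet> (V *v y) = (x v* V) \<bullet> y" by (simp add: dot_lmul_matrix)
  also have "x v* V = V *v x" using assms by (metis transpose_matrix_vector)
  finally show ?thesis by (simp add: inner_commute)
qed

theorem lemma1: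
  fixes V :: "real^'n^'n" and theta_hat :: "real^'n" and beta :: real
  assumes "sym_pos_def_mat V"
    and "beta \<ge> 0"
    and "wnorm V theta_hat > beta"
  defines "E \<equiv> {theta. wnorm V (theta - theta_hat) \<le> beta}"
    and "phi \<equiv> sqrt ((wnorm V theta_hat)\<^sup>2 - beta\<^sup>2)"
  shows "phi > 0 \<and> 0 \<notin> E \<and>
         (\<forall>theta\<in>E. wnorm V (theta /\<^sub>R norm theta) \<le> wnorm (V ** V) theta_hat / phi)"
proof -
  define Q where "Q x = x \<bullet> (V *v x)" for x
  have tr: "transpose V = V" and pd: "\<And>x. x \<noteq> 0 \<Longrightarrow> Q x > 0"
    using assms(1) unfolding sym_pos_def_mat_def Q_def by auto
  have Qnn: "Q x \<ge> 0" for x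
    using pd[of x] by (cases "x = 0") (auto simp: Q_def)
  have wQ: "wnorm V x = sqrt (Q x)" for x by (simp add: wnorm_def Q_def)
  have wsq: "(wnorm V x)\<^sup>2 = Q x" for x using Qnn[of x] by (simp add: wQ)
  have Qsc: "Q (c *\<^sub>R x) = c\<^sup>2 * Q x" for c x
    by (simp add: Q_def matrix_vector_mult_scaleR power2_eq_square)
  have Qdiff: "Q (t - h) = Q t - 2 * (t \<bullet> (V *v h)) + Q h" for t h
    using symV[OF tr, of h t]
    by (simp add: Q_def matrix_vector_mult_diff_distrib inner_diff_left inner_diff_right)
  have VV: "wnorm (V ** V) theta_hat = norm (V *v theta_hat)"
  proof -
    have "theta_hat \<bullet> ((V ** V) *v theta_hat) = (V *v theta_hat) \<bullet> (V *v theta_hat)"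
      using symV[OF tr, of theta_hat "V *v theta_hat"]
      by (simp add: matrix_vector_mul_assoc[symmetric])
    thus ?thesis by (simp add: wnorm_def norm_eq_sqrt_inner)
  qed
  let ?a = "wnorm V theta_hat"
  have a0: "?a \<ge> 0" by (simp add: wQ Qnn)
  have "?a\<^sup>2 > beta\<^sup>2" using assms(2,3) by (simp add: power_strict_mono)
  hence phipos: "phi > 0" unfolding phi_def by simp
  have phisq: "phi\<^sup>2 = Q theta_hat - beta\<^sup>2"
    using \<open>?a\<^sup>2 > beta\<^sup>2\<close> unfolding phi_def by (simp add: wsq)
  have Qneg: "Q (- x) = Q x" for x using Qsc[of "-1" x] by simp
  have notin: "0 \<notin> E" unfolding E_def using assms(3) by (simp add: wQ Qneg)
  have main: "wnorm V (theta /\<^sub>R norm theta) \<le> wnorm (V ** V) theta_hat / phi"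
    if th: "theta \<in> E" for theta
  proof -
    have tn0: "theta \<noteq> 0" using th notin by auto
    have "Q (theta - theta_hat) \<le> beta\<^sup>2"
      using th assms(2) unfolding E_def
      by (metis mem_Collect_eq power_mono wQ wnorm_def wsq real_sqrt_ge_zero Qnn)
    define s where "s = sqrt (Q theta)"
    have s0: "s \<ge> 0" using Qnn[of theta] by (simp add: s_def)
    have ssq: "s\<^sup>2 = Q theta" using Qnn[of theta] by (simp add: s_def)
    have "2 * (theta \<bullet> (V *v theta_hat)) \<ge> s\<^sup>2 + phi\<^sup>2"
      using \<open>Q (theta - theta_hat) \<le> beta\<^sup>2\<close> Qdiff[of theta theta_hat] ssq phisq by linarith
    moreover have "s\<^sup>2 + phi\<^sup>2 \<ge> 2 * s * phi"
      using sum_squares_bound[of s phi] Qnn[of theta] by simp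
    moreover have "theta \<bullet> (V *v theta_hat) \<le> norm theta * norm (V *v theta_hat)"
      by (simp add: norm_cauchy_schwarz)
    ultimately have key: "s * phi \<le> norm theta * norm (V *v theta_hat)" by linarith
    have nt: "norm theta > 0" using tn0 by simp
    have "wnorm V (theta /\<^sub>R norm theta) = s / norm theta"
      unfolding wQ Qsc s_def using nt
      by (simp add: real_sqrt_mult power_divide divide_inverse mult.commute)
    also have "\<dots> \<le> norm (V *v theta_hat) / phi"
      using key nt phipos by (simp add: divide_simps mult.commute)
    finally show ?thesis by (simp add: VV)
  qed
  show ?thesis using phipos notin main by blast
qed

end
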